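(* For every $n\in\mathbb{N}$ and every formula $\varphi$ of $\mathbf{CPN}_n$: if $\models_{(n)}\varphi$ then $\vdash_{(n)}\varphi$.
   Context: Fix $n\in\mathbb{N}$, $n\ge 1$, and write $[n]=\{1,\dots,n\}$. Chains: a chain over $[n]$ is a finite sequence of distinct elements of $[n]$; chains with the same length and the same symbols are identified, so a chain is effectively a subset of $[n]$. $c_k$ denotes a chain with $k$ symbols, $\epsilon$ the empty chain, and $(n)$ the chain consisting of all symbols of $[n]$. For chains $c,d$: the concatenation $c\cdot d$ is the chain of symbols occurring in $c$ or in $d$; the coconcatenation $c\otimes d$ is the chain of symbols occurring in exactly one of $c,d$; $d$ is a subchain of $c$ if every symbol of $d$ is a symbol of $c$. The complementary chain $c'_{n-k}$ of $c_k$ is the chain of the symbols of $[n]$ not occurring in $c_k$. Language of $\mathbf{CPN}_n$: a countable set $P_n$ of propositional letters; constants $\perp_c$ for each chain $c$ over $[n]$ with $1\le |c|\le n-1$, and constants $\perp_{(n)}$ (contradiction) and $\top_{(n)}$ (truth); a unary connective $\neg_c$ for each nonempty chain $c$ over $[n]$ ($\neg_{(n)}$ is the strong negation; the $\neg_c$ with $|c|\le n-1$ are weak negations); a binary connective $\to_{(n)}$. Formulas: propositional letters and constants are formulas; if $\varphi,\psi$ are formulas then so are $\neg_c\varphi$ and $(\varphi\to_{(n)}\psi)$. Conventions: $\neg_\epsilon\varphi:=\varphi$, $\perp_\epsilon:=\top_{(n)}$, and $\perp_c$ for $c=(n)$ means $\perp_{(n)}$. Abbreviations: $\varphi\wedge_{(n)}\psi:=\neg_{(n)}(\varphi\to_{(n)}\neg_{(n)}\psi)$,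 $\varphi\vee_{(n)}\psi:=\neg_{(n)}\varphi\to_{(n)}\psi$, $\varphi\leftrightarrow_{(n)}\psi:=(\varphi\to_{(n)}\psi)\wedge_{(n)}(\psi\to_{(n)}\varphi)$. Axioms of $\mathbf{CPN}_n$, for all formulas $\varphi,\psi,\chi$ and all nonempty chains $c_k,c_r$ over $[n]$: (A1) $\varphi\to_{(n)}(\psi\to_{(n)}\varphi)$; (A2) $(\varphi\to_{(n)}(\psi\to_{(n)}\chi))\to_{(n)}((\varphi\to_{(n)}\psi)\to_{(n)}(\varphi\to_{(n)}\chi))$; (A3) $(\neg_{(n)}\psi\to_{(n)}\neg_{(n)}\varphi)\to_{(n)}((\neg_{(n)}\psi\to_{(n)}\varphi)\to_{(n)}\psi)$; (A4) $\varphi\to_{(n)}(\perp_{c_k}\to_{(n)}\neg_{c_k}\varphi)$; (A5) $\neg_{c_k}\neg_{c_r}\varphi\leftrightarrow_{(n)}\neg_{c_k\otimes c_r}\varphi$; (A6) $\neg_{c_k}\perp_{c_r}\leftrightarrow_{(n)}\perp_{c_k\otimes c_r}$; (A7) $\perp_{c_k}\to_{(n)}\perp_{c_r}$, whenever $c_r$ is a subchain of $c_k$. The only rule of inference is modus ponens (from $\varphi$ and $\varphi\to_{(n)}\psi$ infer $\psi$). For a set $\Sigma$ of formulas, $\Sigma\vdash_{(n)}\varphi$ means there is a finite sequence of formulas ending with $\varphi$, each of which is an axiom, a member of $\Sigma$, or obtained from two earlier members by modus ponens; $\vdash_{(n)}\varphi$ means $\emptyset\vdash_{(n)}\varphi$.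 Semantics: for each $i\in[n]$ there is a world $\mathcal M_i=\{T_i,F_i\}$ (pairwise disjoint sets). A valuation $\mathcal V$ assigns to each propositional letter $p$ and each $i\in[n]$ a value $v_i(p)\in\mathcal M_i$ (independently for different $i$). It extends to all formulas, for each $i$, by: $\bar v_i(p)=v_i(p)$ for letters; $\bar v_i(\perp_c)=F_i$ if $i$ is a symbol of $c$ and $T_i$ otherwise (so $\bar v_i(\perp_{(n)})=F_i$ and $\bar v_i(\top_{(n)})=T_i$); $\bar v_i(\neg_c\varphi)=\bar v_i(\varphi)$ if $i$ is not a symbol of $c$, and the opposite value ($T_i\leftrightarrow F_i$) if $i$ is a symbol of $c$; $\bar v_i(\varphi\to_{(n)}\psi)=F_i$ iff $\bar v_i(\varphi)=T_i$ and $\bar v_i(\psi)=F_i$, otherwise $T_i$ (hence $\wedge_{(n)},\vee_{(n)}$ behave classically in each world). Write $\bar{\mathcal V}(\varphi)=(\bar v_1(\varphi),\dots,\bar v_n(\varphi))$. A formula $\varphi$ is a tautology, written $\models_{(n)}\varphi$, iff $\bar{\mathcal V}(\varphi)=(T_1,\dots,T_n)$ for every valuation $\mathcal V$. *)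

theory Defs
  imports Main
begin

text \<open>Chains over [n] are identified with subsets of {1..n} (as in the paper,
chains with the same symbols are identified). Propositional letters are indexed by nat.\<close>

datatype fm =
    Var nat
  | Bot "nat set"        (* constant \<bottom>_c; Bot {} = \<top>_(n), Bot {1..n} = \<bottom>_(n) *)
  | Neg "nat set" fm
  | Imp fm fm

fun wff :: "nat \<Rightarrow> fm \<Rightarrow> bool" where
  "wff n (Var p) = True"
| "wff n (Bot c) = (c \<subseteq> {1..n})"
| "wff n (Neg c \<phi>) = (c \<noteq> {} \<and> c \<subseteq> {1..n} \<and> wff n \<phi>)"
| "wff n (Imp \<phi> \<psi>) = (wff n \<phi> \<and> wff n \<psi>)"

definition cocat :: "nat set \<Rightarrow> nat set \<Rightarrow> nat set" where
  "cocat c d = (c - d) \<union> (d - c)"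

definition neg :: "nat set \<Rightarrow> fm \<Rightarrow> fm" where
  "neg c \<phi> = (if c = {} then \<phi> else Neg c \<phi>)"

definition sneg :: "nat \<Rightarrow> fm \<Rightarrow> fm" where
  "sneg n \<phi> = Neg {1..n} \<phi>"

definition And :: "nat \<Rightarrow> fm \<Rightarrow> fm \<Rightarrow> fm" where
  "And n \<phi> \<psi> = sneg n (Imp \<phi> (sneg n \<psi>))"

definition Iff :: "nat \<Rightarrow> fm \<Rightarrow> fm \<Rightarrow> fm" where
  "Iff n \<phi> \<psi> = And n (Imp \<phi> \<psi>) (Imp \<psi> \<phi>)"

inductive prov :: "nat \<Rightarrow> fm \<Rightarrow> bool" where
  A1: "\<lbrakk>wff n \<phi>; wff n \<psi>\<rbrakk> \<Longrightarrow> prov n (Imp \<phi> (Imp \<psi> \<phi>))"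
| A2: "\<lbrakk>wff n \<phi>; wff n \<psi>; wff n \<chi>\<rbrakk> \<Longrightarrow>
        prov n (Imp (Imp \<phi> (Imp \<psi> \<chi>)) (Imp (Imp \<phi> \<psi>) (Imp \<phi> \<chi>)))"
| A3: "\<lbrakk>wff n \<phi>; wff n \<psi>\<rbrakk> \<Longrightarrow>
        prov n (Imp (Imp (sneg n \<psi>) (sneg n \<phi>)) (Imp (Imp (sneg n \<psi>) \<phi>) \<psi>))"
| A4: "\<lbrakk>wff n \<phi>; c \<noteq> {}; c \<subseteq> {1..n}\<rbrakk> \<Longrightarrow>
        prov n (Imp \<phi> (Imp (Bot c) (Neg c \<phi>)))"
| A5: "\<lbrakk>wff n \<phi>; c \<noteq> {}; c \<subseteq> {1..n}; d \<noteq> {}; d \<subseteq> {1..n}\<rbrakk> \<Longrightarrow>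
        prov n (Iff n (Neg c (Neg d \<phi>)) (neg (cocat c d) \<phi>))"
| A6: "\<lbrakk>c \<noteq> {}; c \<subseteq> {1..n}; d \<noteq> {}; d \<subseteq> {1..n}\<rbrakk> \<Longrightarrow>
        prov n (Iff n (Neg c (Bot d)) (Bot (cocat c d)))"
| A7: "\<lbrakk>c \<noteq> {}; c \<subseteq> {1..n}; d \<noteq> {}; d \<subseteq> c\<rbrakk> \<Longrightarrow>
        prov n (Imp (Bot c) (Bot d))"
| MP: "\<lbrakk>prov n \<phi>; prov n (Imp \<phi> \<psi>)\<rbrakk> \<Longrightarrow> prov n \<psi>"

text \<open>Semantics: v p i = True means v_i(p) = T_i.\<close>
fun eval :: "(nat \<Rightarrow> nat \<Rightarrow> bool) \<Rightarrow> nat \<Rightarrow> fm \<Rightarrow> bool" where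
  "eval v i (Var p) = v p i"
| "eval v i (Bot c) = (i \<notin> c)"
| "eval v i (Neg c \<phi>) = (if i \<in> c then \<not> eval v i \<phi> else eval v i \<phi>)"
| "eval v i (Imp \<phi> \<psi>) = (eval v i \<phi> \<longrightarrow> eval v i \<psi>)"

definition taut :: "nat \<Rightarrow> fm \<Rightarrow> bool" where
  "taut n \<phi> = (\<forall>v. \<forall>i\<in>{1..n}. eval v i \<phi>)"

end

theory Submission
  imports Defs
begin

inductive der :: "nat \<Rightarrow> fm set \<Rightarrow> fm \<Rightarrow> bool" for n :: nat and G :: "fm set" where
  dAx: "prov n \<phi> \<Longrightarrow> der n G \<phi>"
| dH: "\<phi> \<in> G \<Longrightarrow> der n G \<phi>"
| dMP: "der n G \<phi> \<Longrightarrow> der n G (Imp \<phi> \<psi>) \<Longrightarrow> der n G \<psi>"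

lemma der_mono: "der n G \<phi> \<Longrightarrow> G \<subseteq> H \<Longrightarrow> der n H \<phi>"
  by (induction rule: der.induct) (auto intro: der.intros)

lemma der_cut: "der n G \<phi> \<Longrightarrow> (\<And>g. g \<in> G \<Longrightarrow> der n H g) \<Longrightarrow> der n H \<phi>"
  by (induction rule: der.induct) (auto intro: der.intros)

lemma der_empty: "der n {} \<phi> \<Longrightarrow> prov n \<phi>"
  by (induction rule: der.induct) (auto intro: prov.MP)

lemma wff_sneg[simp]: "n \<ge> 1 \<Longrightarrow> wff n (sneg n A) = wff n A"
  by (auto simp: sneg_def)

lemma prov_wff: "prov n \<phi> \<Longrightarrow> n \<ge> 1 \<Longrightarrow> wff n \<phi>"
  by (induction rule: prov.induct) (auto simp: Iff_def And_def sneg_def neg_def cocat_def)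

lemma der_wff: "der n G \<phi> \<Longrightarrow> n \<ge> 1 \<Longrightarrow> \<forall>g\<in>G. wff n g \<Longrightarrow> wff n \<phi>"
  by (induction rule: der.induct) (auto dest: prov_wff)

fun vars :: "fm \<Rightarrow> nat set" where
  "vars (Var p) = {p}"
| "vars (Bot c) = {}"
| "vars (Neg c \<phi>) = vars \<phi>"
| "vars (Imp \<phi> \<psi>) = vars \<phi> \<union> vars \<psi>"

lemma finite_vars: "finite (vars \<phi>)"
  by (induction \<phi>) auto

definition Gw :: "nat \<Rightarrow> nat \<Rightarrow> fm set" where
  "Gw n j = {Bot d | d. d \<noteq> {} \<and> d \<subseteq> {1..n} \<and> j \<notin> d}"

definition Lits :: "nat \<Rightarrow> (nat \<Rightarrow> bool) \<Rightarrow> nat set \<Rightarrow> fm set" where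
  "Lits n \<rho> S = (\<lambda>p. if \<rho> p then Var p else sneg n (Var p)) ` S"

lemma cocat1: "c \<subseteq> {1..n} \<Longrightarrow> cocat c {1..n} = {1..n} - c"
  by (auto simp: cocat_def)
lemma cocat2: "c \<subseteq> {1..n} \<Longrightarrow> cocat {1..n} c = {1..n} - c"
  by (auto simp: cocat_def)
lemma cocat3: "c \<subseteq> {1..n} \<Longrightarrow> cocat ({1..n} - c) {1..n} = c"
  by (auto simp: cocat_def)

context
  fixes n :: nat
  assumes n1: "n \<ge> 1"
begin

lemma imp_refl: "wff n A \<Longrightarrow> prov n (Imp A A)"
proof -
  assume a: "wff n A"
  have 1: "prov n (Imp (Imp A (Imp (Imp A A) A)) (Imp (Imp A (Imp A A)) (Imp A A)))"
    using a by (intro prov.A2) auto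
  have 2: "prov n (Imp A (Imp (Imp A A) A))" using a by (intro prov.A1) auto
  have 3: "prov n (Imp A (Imp A A))" using a by (intro prov.A1) auto
  show ?thesis using prov.MP[OF 3 prov.MP[OF 2 1]] .
qed

lemma deduct:
  assumes "der n (insert A G) B" "wff n A" "\<forall>g\<in>G. wff n g"
  shows "der n G (Imp A B)"
  using assms(1)
proof (induction rule: der.induct)
  case (dAx \<phi>)
  have "wff n \<phi>" using prov_wff[OF dAx n1] .
  then show ?case using dAx by (meson der.dAx der.dMP prov.A1 assms(2))
next
  case (dH \<phi>)
  then show ?case
  proof
    assume "\<phi> = A" then show ?thesis using imp_refl assms(2) der.dAx by blast
  next
    assume "\<phi> \<in> G"
    then have "wff n \<phi>" using assms(3) by blast
    then show ?thesis using \<open>\<phi> \<in> G\<close> by (meson der.dAx der.dH der.dMP prov.A1 assms(2))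
  qed
next
  case (dMP \<phi> \<psi>)
  have wG: "\<forall>g\<in>insert A G. wff n g" using assms by auto
  have w1: "wff n \<phi>" using der_wff[OF dMP.hyps(1) n1 wG] .
  have w2: "wff n \<psi>" using der_wff[OF dMP.hyps(2) n1 wG] by simp
  have "prov n (Imp (Imp A (Imp \<phi> \<psi>)) (Imp (Imp A \<phi>) (Imp A \<psi>)))"
    using assms(2) w1 w2 by (intro prov.A2)
  then show ?case using dMP.IH by (meson der.dAx der.dMP)
qed

lemma exfalso:
  assumes "der n G (sneg n A)" "der n G A" "wff n A" "wff n B"
  shows "der n G B"
proof -
  have a3: "prov n (Imp (Imp (sneg n B) (sneg n A)) (Imp (Imp (sneg n B) A) B))"
    using assms n1 by (intro prov.A3)
  have "prov n (Imp (sneg n A) (Imp (sneg n B) (sneg n A)))" using assms n1 by (intro prov.A1) auto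
  then have 1: "der n G (Imp (sneg n B) (sneg n A))" using assms(1) by (meson der.dAx der.dMP)
  have "prov n (Imp A (Imp (sneg n B) A))" using assms n1 by (intro prov.A1) auto
  then have 2: "der n G (Imp (sneg n B) A)" using assms(2) by (meson der.dAx der.dMP)
  show ?thesis using 1 2 a3 by (meson der.dAx der.dMP)
qed

lemma dneg_elim:
  assumes "der n G (sneg n (sneg n A))" "wff n A"
  shows "der n G A"
proof -
  have a3: "prov n (Imp (Imp (sneg n A) (sneg n (sneg n A))) (Imp (Imp (sneg n A) (sneg n A)) A))"
    using assms n1 by (intro prov.A3) auto
  have "prov n (Imp (sneg n (sneg n A)) (Imp (sneg n A) (sneg n (sneg n A))))"
    using assms n1 by (intro prov.A1) auto
  then have 1: "der n G (Imp (sneg n A) (sneg n (sneg n A)))" using assms(1) by (meson der.dAx der.dMP)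
  have 2: "der n G (Imp (sneg n A) (sneg n A))" using imp_refl assms n1 der.dAx by simp
  show ?thesis using 1 2 a3 by (meson der.dAx der.dMP)
qed

lemma by_contra:
  assumes "der n (insert (sneg n B) G) C" "der n (insert (sneg n B) G) (sneg n C)"
    "wff n B" "wff n C" "\<forall>g\<in>G. wff n g"
  shows "der n G B"
proof -
  have 1: "der n G (Imp (sneg n B) C)" using deduct assms n1 by simp
  have 2: "der n G (Imp (sneg n B) (sneg n C))" using deduct assms n1 by simp
  have a3: "prov n (Imp (Imp (sneg n B) (sneg n C)) (Imp (Imp (sneg n B) C) B))"
    using assms n1 by (intro prov.A3)
  show ?thesis using 1 2 a3 by (meson der.dAx der.dMP)
qed

lemma mt:
  assumes "der n G (Imp A B)" "der n G (sneg n B)" "wff n A" "wff n B" "\<forall>g\<in>G. wff n g"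
  shows "der n G (sneg n A)"
proof -
  let ?H = "insert (sneg n (sneg n A)) G"
  have "der n ?H A" by (rule dneg_elim) (auto intro: der.dH assms)
  then have "der n ?H B" using der_mono[OF assms(1)] by (meson der.dMP subset_insertI)
  moreover have "der n ?H (sneg n B)" using der_mono[OF assms(2)] by blast
  ultimately show ?thesis using by_contra assms n1 by simp
qed

lemma case_split:
  assumes "der n (insert A G) B" "der n (insert (sneg n A) G) B" "wff n A" "wff n B" "\<forall>g\<in>G. wff n g"
  shows "der n G B"
proof -
  have 1: "der n G (Imp A B)" using deduct assms by simp
  have 2: "der n G (Imp (sneg n A) B)" using deduct assms n1 by simp
  let ?H = "insert (sneg n B) G"
  have wH: "\<forall>g\<in>?H. wff n g" using assms n1 by simp
  have "der n ?H (Imp A B)" using der_mono[OF 1] by blast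
  moreover have "der n ?H (sneg n B)" by (auto intro: der.dH)
  ultimately have "der n ?H (sneg n A)" using mt wH assms by blast
  then have "der n ?H B" using der_mono[OF 2] by (meson der.dMP subset_insertI)
  moreover have "der n ?H (sneg n B)" by (auto intro: der.dH)
  ultimately show ?thesis using by_contra assms n1 by simp
qed


lemma imp_negB:
  assumes "der n G A" "der n G (sneg n B)" "wff n A" "wff n B" "\<forall>g\<in>G. wff n g"
  shows "der n G (sneg n (Imp A B))"
proof -
  let ?H = "insert (sneg n (sneg n (Imp A B))) G"
  have "der n ?H (Imp A B)" by (rule dneg_elim) (auto intro: der.dH assms)
  then have "der n ?H B" using der_mono[OF assms(1)] by (meson der.dMP subset_insertI)
  moreover have "der n ?H (sneg n B)" using der_mono[OF assms(2)] by blast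
  ultimately show ?thesis using by_contra[of "sneg n (Imp A B)" G B] assms n1 by simp
qed

lemma negimp_fst:
  assumes "der n G (sneg n (Imp X Z))" "wff n X" "wff n Z" "\<forall>g\<in>G. wff n g"
  shows "der n G X"
proof -
  let ?H = "insert (sneg n X) G"
  have "der n (insert X ?H) Z" by (rule exfalso[of _ X]) (auto intro: der.dH assms)
  then have "der n ?H (Imp X Z)" using deduct assms n1 by simp
  moreover have "der n ?H (sneg n (Imp X Z))" using der_mono[OF assms(1)] by blast
  ultimately show ?thesis using by_contra assms n1 by simp
qed

lemma negimp_snd:
  assumes "der n G (sneg n (Imp X Z))" "wff n X" "wff n Z" "\<forall>g\<in>G. wff n g"
  shows "der n G (sneg n Z)"
proof -
  let ?H = "insert (sneg n (sneg n Z)) G"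
  have "der n ?H Z" by (rule dneg_elim) (auto intro: der.dH assms)
  moreover have "prov n (Imp Z (Imp X Z))" using assms by (intro prov.A1)
  ultimately have "der n ?H (Imp X Z)" by (meson der.dAx der.dMP)
  moreover have "der n ?H (sneg n (Imp X Z))" using der_mono[OF assms(1)] by blast
  ultimately show ?thesis using by_contra assms n1 by simp
qed

lemma iff_imps:
  assumes "der n G (Iff n a b)" "wff n a" "wff n b" "\<forall>g\<in>G. wff n g"
  shows "der n G (Imp a b)" "der n G (Imp b a)"
proof -
  have d: "der n G (sneg n (Imp (Imp a b) (sneg n (Imp b a))))"
    using assms(1) by (simp add: Iff_def And_def)
  show "der n G (Imp a b)" using negimp_fst[OF d] assms n1 by simp
  have "der n G (sneg n (sneg n (Imp b a)))" using negimp_snd[OF d] assms n1 by simp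
  then show "der n G (Imp b a)" using dneg_elim assms by simp
qed

lemma iffD1':
  assumes "prov n (Iff n a b)" "der n G a" "wff n a" "wff n b" "\<forall>g\<in>G. wff n g"
  shows "der n G b"
  using iff_imps(1)[OF der.dAx[OF assms(1)]] assms der.dMP by blast

lemma iffD2':
  assumes "prov n (Iff n a b)" "der n G b" "wff n a" "wff n b" "\<forall>g\<in>G. wff n g"
  shows "der n G a"
  using iff_imps(2)[OF der.dAx[OF assms(1)]] assms der.dMP by blast

lemma not_bot:
  assumes "\<forall>g\<in>G. wff n g"
  shows "der n G (sneg n (Bot {1..n}))"
proof (rule case_split[of "Bot {1..n}"])
  let ?H = "insert (Bot {1..n}) G"
  have "prov n (Imp (Bot {1..n}) (Imp (Bot {1..n}) (Neg {1..n} (Bot {1..n}))))"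
    using n1 by (intro prov.A4) auto
  then show "der n ?H (sneg n (Bot {1..n}))" unfolding sneg_def
    by (meson der.dAx der.dH der.dMP insertI1)
qed (use assms n1 in \<open>auto intro: der.dH\<close>)

lemma top:
  assumes "\<forall>g\<in>G. wff n g"
  shows "der n G (Bot {})"
proof -
  have "prov n (Iff n (Neg {1..n} (Bot {1..n})) (Bot (cocat {1..n} {1..n})))"
    using n1 by (intro prov.A6) auto
  then have "prov n (Iff n (sneg n (Bot {1..n})) (Bot {}))" by (simp add: cocat_def sneg_def)
  then show ?thesis using iffD1' not_bot assms n1 by simp
qed


lemma wff_G: "\<forall>g\<in>Gw n j \<union> Lits n \<rho> S. wff n g"
  using n1 by (auto simp: Gw_def Lits_def)

lemma Kneg:
  assumes "Gw n j \<subseteq> G" "j \<notin> d" "d \<noteq> {}" "d \<subseteq> {1..n}" "der n G \<psi>" "wff n \<psi>"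
  shows "der n G (Neg d \<psi>)"
proof -
  have "Bot d \<in> G" using assms unfolding Gw_def by blast
  moreover have "prov n (Imp \<psi> (Imp (Bot d) (Neg d \<psi>)))" using assms by (intro prov.A4)
  ultimately show ?thesis using assms(5) by (meson der.dAx der.dH der.dMP)
qed

lemma kalmar:
  assumes j: "j \<in> {1..n}"
  shows "wff n \<psi> \<Longrightarrow> vars \<psi> \<subseteq> S \<Longrightarrow>
    der n (Gw n j \<union> Lits n \<rho> S) (if eval (\<lambda>p i. \<rho> p) j \<psi> then \<psi> else sneg n \<psi>)"
proof (induction \<psi>)
  case (Var p)
  then show ?case by (auto simp: Lits_def intro!: der.dH)
next
  case (Bot c)
  let ?G = "Gw n j \<union> Lits n \<rho> S"
  have wG: "\<forall>g\<in>?G. wff n g" using wff_G .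
  show ?case
  proof (cases "j \<in> c")
    case False
    show ?thesis
    proof (cases "c = {}")
      case True then show ?thesis using top[OF wG] by simp
    next
      case c: False
      then have "Bot c \<in> ?G" using False Bot by (auto simp: Gw_def)
      then show ?thesis using False by (auto intro: der.dH)
    qed
  next
    case True
    show ?thesis
    proof (cases "c = {1..n}")
      case True then show ?thesis using not_bot[OF wG] \<open>j \<in> c\<close> by simp
    next
      case False
      have cs: "c \<subseteq> {1..n}" using Bot by simp
      have ne: "{1..n} - c \<noteq> {}" using False cs by blast
      have "prov n (Iff n (Neg {1..n} (Bot c)) (Bot (cocat {1..n} c)))"
        using n1 True cs by (intro prov.A6) auto
      then have a6: "prov n (Iff n (sneg n (Bot c)) (Bot ({1..n} - c)))"
        using cocat2[OF cs] by (simp add: sneg_def)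
      have "Bot ({1..n} - c) \<in> ?G" using ne True by (auto simp: Gw_def)
      then have "der n ?G (sneg n (Bot c))"
        using iffD2'[OF a6 der.dH] wG cs n1 by auto
      then show ?thesis using True by simp
    qed
  qed
next
  case (Imp a b)
  let ?G = "Gw n j \<union> Lits n \<rho> S"
  have wG: "\<forall>g\<in>?G. wff n g" using wff_G .
  have wa: "wff n a" and wb: "wff n b" using Imp by auto
  have IHa: "der n ?G (if eval (\<lambda>p i. \<rho> p) j a then a else sneg n a)" using Imp by auto
  have IHb: "der n ?G (if eval (\<lambda>p i. \<rho> p) j b then b else sneg n b)" using Imp by auto
  show ?case
  proof (cases "eval (\<lambda>p i. \<rho> p) j a")
    case False
    have "der n (insert a ?G) b"
      by (rule exfalso[of _ a]) (use IHa False wa wb in \<open>auto intro: der.dH der_mono\<close>)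
    then show ?thesis using False deduct wa wG by simp
  next
    case ta: True
    show ?thesis
    proof (cases "eval (\<lambda>p i. \<rho> p) j b")
      case True
      have "prov n (Imp b (Imp a b))" using wa wb by (intro prov.A1)
      then show ?thesis using True IHb by (auto intro: der.dAx der.dMP)
    next
      case False
      then show ?thesis using ta IHa IHb imp_negB wa wb wG by simp
    qed
  qed
next
  case (Neg c \<psi>)
  let ?G = "Gw n j \<union> Lits n \<rho> S"
  let ?C = "{1..n} - c"
  have wG: "\<forall>g\<in>?G. wff n g" using wff_G .
  have w: "wff n \<psi>" and cne: "c \<noteq> {}" and cs: "c \<subseteq> {1..n}" using Neg by auto
  have wN: "wff n (Neg d \<psi>)" if "d \<noteq> {}" "d \<subseteq> {1..n}" for d using that w by simp
  have wNN: "wff n (Neg d (Neg e \<psi>))" if "d \<noteq> {}" "d \<subseteq> {1..n}" "e \<noteq> {}" "e \<subseteq> {1..n}" for d e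
    using that w by simp
  have nsub: "{1..n} \<noteq> {}" "{1..n} \<subseteq> {1..n}" using n1 by auto
  have Csub: "?C \<subseteq> {1..n}" by blast
  have IH: "der n ?G (if eval (\<lambda>p i. \<rho> p) j \<psi> then \<psi> else sneg n \<psi>)" using Neg by auto
  have sub: "Gw n j \<subseteq> ?G" by blast
  have "prov n (Iff n (Neg c (Neg {1..n} \<psi>)) (neg (cocat c {1..n}) \<psi>))"
    using cne cs w nsub by (intro prov.A5) auto
  then have a5a: "prov n (Iff n (Neg c (Neg {1..n} \<psi>)) (neg ?C \<psi>))" using cocat1[OF cs] by simp
  have "prov n (Iff n (Neg {1..n} (Neg c \<psi>)) (neg (cocat {1..n} c) \<psi>))"
    using cne cs w nsub by (intro prov.A5) auto
  then have a5b: "prov n (Iff n (Neg {1..n} (Neg c \<psi>)) (neg ?C \<psi>))" using cocat2[OF cs] by simp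
  have wnC: "wff n (neg ?C \<psi>)" using w by (simp add: neg_def)
  show ?case
  proof (cases "j \<in> c")
    case False
    have Cne: "?C \<noteq> {}" using False j by blast
    show ?thesis
    proof (cases "eval (\<lambda>p i. \<rho> p) j \<psi>")
      case True
      then show ?thesis using False Kneg[OF sub False cne cs] IH w by simp
    next
      case ev: False
      have "der n ?G (Neg c (Neg {1..n} \<psi>))"
        using Kneg[OF sub False cne cs] IH w ev n1 by (simp add: sneg_def)
      then have "der n ?G (neg ?C \<psi>)"
        using iffD1'[OF a5a] wG wNN[OF cne cs nsub] wnC by blast
      then have "der n ?G (Neg {1..n} (Neg c \<psi>))"
        using iffD2'[OF a5b] wG wNN[OF nsub cne cs] wnC by blast
      then show ?thesis using False ev by (simp add: sneg_def)
    qed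
  next
    case True
    show ?thesis
    proof (cases "eval (\<lambda>p i. \<rho> p) j \<psi>")
      case ev: True
      have "der n ?G (neg ?C \<psi>)"
      proof (cases "?C = {}")
        case True then show ?thesis using IH ev by (simp add: neg_def)
      next
        case False
        have "j \<notin> ?C" using \<open>j \<in> c\<close> by blast
        then show ?thesis using Kneg[OF sub _ False Csub] IH ev w False by (simp add: neg_def)
      qed
      then have "der n ?G (Neg {1..n} (Neg c \<psi>))"
        using iffD2'[OF a5b] wG wNN[OF nsub cne cs] wnC by blast
      then show ?thesis using True ev by (simp add: sneg_def)
    next
      case ev: False
      have "der n ?G (Neg c \<psi>)"
      proof (cases "c = {1..n}")
        case True then show ?thesis using IH ev by (simp add: sneg_def)
      next
        case False
        have Cne: "?C \<noteq> {}" using False cs by blast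
        have "j \<notin> ?C" using \<open>j \<in> c\<close> by blast
        then have "der n ?G (Neg ?C (Neg {1..n} \<psi>))"
          using Kneg[OF sub _ Cne Csub] IH ev w n1 by (simp add: sneg_def)
        moreover have "prov n (Iff n (Neg ?C (Neg {1..n} \<psi>)) (neg (cocat ?C {1..n}) \<psi>))"
          using Cne Csub w nsub by (intro prov.A5) auto
        ultimately show ?thesis using iffD1' cocat3[OF cs] wG wNN[OF Cne Csub nsub] w cne cs
          by (simp add: neg_def)
      qed
      then show ?thesis using True ev by simp
    qed
  qed
qed


lemma elim:
  assumes "finite S"
  shows "(\<And>\<rho>. der n (G \<union> Lits n \<rho> S) \<phi>) \<Longrightarrow> wff n \<phi> \<Longrightarrow> \<forall>g\<in>G. wff n g \<Longrightarrow> der n G \<phi>"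
  using assms
proof (induction S arbitrary: G rule: finite_induct)
  case empty
  then show ?case by (simp add: Lits_def)
next
  case (insert p S)
  have L: "Lits n (\<rho>(p := b)) S = Lits n \<rho> S" for \<rho> b
    using insert.hyps(2) unfolding Lits_def by (auto intro!: image_cong)
  have 1: "der n (insert (Var p) G) \<phi>"
  proof (rule insert.IH)
    fix \<rho>
    have "der n (G \<union> Lits n (\<rho>(p := True)) (insert p S)) \<phi>" by (rule insert.prems(1))
    then show "der n (insert (Var p) G \<union> Lits n \<rho> S) \<phi>"
      using L[of \<rho> True] by (simp add: Lits_def)
  qed (use insert.prems in auto)
  have 2: "der n (insert (sneg n (Var p)) G) \<phi>"
  proof (rule insert.IH)
    fix \<rho>
    have "der n (G \<union> Lits n (\<rho>(p := False)) (insert p S)) \<phi>" by (rule insert.prems(1))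
    then show "der n (insert (sneg n (Var p)) G \<union> Lits n \<rho> S) \<phi>"
      using L[of \<rho> False] by (simp add: Lits_def)
  qed (use insert.prems n1 in auto)
  show ?case using case_split[OF 1 2] insert.prems by simp
qed

lemma world:
  assumes "j \<in> {1..n}" "wff n \<phi>" "taut n \<phi>"
  shows "der n (Gw n j) \<phi>"
proof (rule elim[OF finite_vars])
  fix \<rho>
  have "eval (\<lambda>p i. \<rho> p) j \<phi>" using assms unfolding taut_def by blast
  then show "der n (Gw n j \<union> Lits n \<rho> (vars \<phi>)) \<phi>" using kalmar[OF assms(1) assms(2), of "vars \<phi>" \<rho>] by simp
qed (use assms n1 in \<open>auto simp: Gw_def\<close>)

lemma accum:
  assumes "\<And>j. j \<in> {1..n} \<Longrightarrow> der n G (Bot {j})" "\<forall>g\<in>G. wff n g"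
  shows "1 \<le> k \<Longrightarrow> k \<le> n \<Longrightarrow> der n G (Bot {1..k})"
proof (induction k)
  case 0 then show ?case by simp
next
  case (Suc k)
  show ?case
  proof (cases "k = 0")
    case True then show ?thesis using assms Suc by simp
  next
    case False
    have Ik: "der n G (Bot {1..k})" using Suc False by simp
    have Ij: "der n G (Bot {Suc k})" using assms Suc by simp
    have "prov n (Imp (Bot {1..k}) (Imp (Bot {Suc k}) (Neg {Suc k} (Bot {1..k}))))"
      using Suc by (intro prov.A4) auto
    then have "der n G (Neg {Suc k} (Bot {1..k}))" using Ik Ij by (meson der.dAx der.dMP)
    moreover have "prov n (Iff n (Neg {Suc k} (Bot {1..k})) (Bot (cocat {Suc k} {1..k})))"
      using Suc False by (intro prov.A6) auto
    moreover have "cocat {Suc k} {1..k} = {1..Suc k}" by (auto simp: cocat_def)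
    ultimately show ?thesis using iffD1' assms Suc by simp
  qed
qed

lemma complete:
  assumes "wff n \<phi>" "taut n \<phi>"
  shows "prov n \<phi>"
proof (cases "n = 1")
  case True
  have "Gw n 1 = {}" using True by (auto simp: Gw_def)
  then show ?thesis using world[of 1] assms True der_empty by auto
next
  case False
  then have n2: "n \<ge> 2" using n1 by simp
  have imp: "der n {} (Imp (Bot ({1..n} - {j})) \<phi>)" if j: "j \<in> {1..n}" for j
  proof -
    have "der n {Bot ({1..n} - {j})} \<phi>"
    proof (rule der_cut[OF world[OF j assms]])
      fix g assume "g \<in> Gw n j"
      then obtain d where d: "g = Bot d" "d \<noteq> {}" "d \<subseteq> {1..n}" "j \<notin> d" by (auto simp: Gw_def)
      have "prov n (Imp (Bot ({1..n} - {j})) (Bot d))" using d n2 j by (intro prov.A7) auto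
      then show "der n {Bot ({1..n} - {j})} g" using d by (meson der.dAx der.dH der.dMP singletonI)
    qed
    then show ?thesis using deduct j by simp
  qed
  let ?H = "{sneg n \<phi>}"
  have wH: "\<forall>g\<in>?H. wff n g" using assms n1 by simp
  have bj: "der n ?H (Bot {j})" if j: "j \<in> {1..n}" for j
  proof -
    have ne: "{1..n} - {j} \<noteq> {}"
    proof (cases "j = 1")
      case True then have "2 \<in> {1..n} - {j}" using n2 by auto
      then show ?thesis by blast
    next
      case False then have "1 \<in> {1..n} - {j}" using n2 by auto
      then show ?thesis by blast
    qed
    have "der n ?H (sneg n (Bot ({1..n} - {j})))"
      using mt[OF der_mono[OF imp[OF j]] der.dH] assms wH j by auto
    moreover have "prov n (Iff n (Neg {1..n} (Bot ({1..n} - {j}))) (Bot (cocat {1..n} ({1..n} - {j}))))"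
      using n1 ne by (intro prov.A6) auto
    moreover have "cocat {1..n} ({1..n} - {j}) = {j}" using j by (auto simp: cocat_def)
    ultimately show ?thesis using iffD1' wH n1 j by (simp add: sneg_def)
  qed
  have "der n ?H (Bot {1..n})" using accum[OF bj wH] n1 by simp
  moreover have "der n ?H (sneg n (Bot {1..n}))" using not_bot[OF wH] .
  ultimately have "der n {} \<phi>" using by_contra[of \<phi> "{}"] assms n1 by simp
  then show ?thesis by (rule der_empty)
qed

end

theorem mainTheorem15:
  fixes n :: nat and \<phi> :: fm
  assumes "n \<ge> 1" and "wff n \<phi>" and "taut n \<phi>"
  shows "prov n \<phi>"
  using complete[OF assms] .

end
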